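(* Let $I\in\operatorname{PI}(B)$ have all-positive sign, i.e. $I(\chi)\in\operatorname{Irr}(B)$ for all $\chi\in\operatorname{Irr}(B)$. Then there exist $\lambda\in\operatorname{Irr}(B)$ and $\sigma\in\operatorname{Aut}(G)$ such that $I$ is a composition of $I_\lambda$ and $I_\sigma$ (specifically, $I_\sigma\circ I_\lambda\circ I=\mathrm{id}$ for suitable such $\lambda,\sigma$).
   Context: Let $p$ be a prime, $\zeta$ a primitive $p$-th root of unity, $K=\mathbb{Q}_p(\zeta)$, $\mathcal{O}=\mathbb{Z}_p[\zeta]$. Let $G=\langle g\rangle$ be cyclic of order $p$, $B=\mathcal{O}G$, $\operatorname{Irr}(B)=\{\chi_0,\dots,\chi_{p-1}\}$ with $\chi_a(g^b)=\zeta^{ab}$. $R_K(B)$ is the free abelian group on $\operatorname{Irr}(B)$ with the standard inner product. For a linear map $I$ of $R_K(B)$ put $\mu_I(x,y)=\sum_{\chi}I(\chi)(x)\chi(y)$. A generalized character $\mu$ of $G\times G$ is perfect if (i) $\mu(x,y)/|C_G(x)|,\ \mu(x,y)/|C_G(y)|\in\mathcal{O}$ for all $x,y$; (ii) whenever $\mu(x,y)\ne0$, $x$ is $p$-regular iff $y$ is. $\operatorname{PI}(B)$ is the group of bijective linear isometries $I$ of $R_K(B)$ with $\mu_I$ perfect. For $\lambda\in\operatorname{Irr}(B)$, $I_\lambda(\chi)=\lambda\chi$; for $\sigma\in\operatorname{Aut}(G)$, $I_\sigma(\chi)=\chi^\sigma$ where $\chi^\sigma(h)=\chi(h^{\sigma^{-1}})$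 (both extended linearly). *)

theory Defs
  imports Complex_Main "HOL-Computational_Algebra.Primes"
begin

text \<open>Model: G = cyclic group of order p, with g^b encoded by the exponent b < p.
  Irr(B) = {chi_a | a < p}, chi_a(g^b) = zeta^(a b).  An element of R_K(B) is an integer
  coefficient vector v :: nat => int supported on {..<p}; v stands for sum_a v a * chi_a.\<close>

definition zeta :: "nat \<Rightarrow> complex" where
  "zeta p = cis (2 * pi / real p)"

definition chi :: "nat \<Rightarrow> nat \<Rightarrow> nat \<Rightarrow> complex" where
  "chi p a b = zeta p ^ (a * b)"

definition RK :: "nat \<Rightarrow> (nat \<Rightarrow> int) set" where
  "RK p = {v. \<forall>a. p \<le> a \<longrightarrow> v a = 0}"

definition basis :: "nat \<Rightarrow> nat \<Rightarrow> int" where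
  "basis a = (\<lambda>c. if c = a then 1 else 0)"

definition Irr :: "nat \<Rightarrow> (nat \<Rightarrow> int) set" where
  "Irr p = {basis a | a. a < p}"

definition ev :: "nat \<Rightarrow> (nat \<Rightarrow> int) \<Rightarrow> nat \<Rightarrow> complex" where
  "ev p v b = (\<Sum>a<p. of_int (v a) * chi p a b)"

definition inner :: "nat \<Rightarrow> (nat \<Rightarrow> int) \<Rightarrow> (nat \<Rightarrow> int) \<Rightarrow> int" where
  "inner p u v = (\<Sum>a<p. u a * v a)"

definition linear_RK :: "nat \<Rightarrow> ((nat \<Rightarrow> int) \<Rightarrow> (nat \<Rightarrow> int)) \<Rightarrow> bool" where
  "linear_RK p f \<longleftrightarrow> (\<forall>a<p. f (basis a) \<in> RK p) \<and>
     (\<forall>v\<in>RK p. f v = (\<lambda>c. \<Sum>a<p. v a * f (basis a) c))"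

definition mu :: "nat \<Rightarrow> ((nat \<Rightarrow> int) \<Rightarrow> (nat \<Rightarrow> int)) \<Rightarrow> nat \<Rightarrow> nat \<Rightarrow> complex" where
  "mu p f x y = (\<Sum>a<p. ev p (f (basis a)) x * chi p a y)"

text \<open>Membership in O for elements of Q(zeta) (embedded in C):
  O \<inter> Q(zeta) = Z_(p)[zeta], i.e. z is p-integral iff m z \<in> Z[zeta] for some integer m prime to p.\<close>
definition in_O :: "nat \<Rightarrow> complex \<Rightarrow> bool" where
  "in_O p z \<longleftrightarrow> (\<exists>m::int. \<not> int p dvd m \<and>
      (\<exists>c::nat \<Rightarrow> int. of_int m * z = (\<Sum>k<p. of_int (c k) * zeta p ^ k)))"

definition centr_card :: "nat \<Rightarrow> nat \<Rightarrow> nat" where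
  "centr_card p x = card {h. h < p \<and> (h + x) mod p = (x + h) mod p}"

text \<open>p-regular elements: order prime to p; g^x has order p / gcd(x,p).\<close>
definition p_regular :: "nat \<Rightarrow> nat \<Rightarrow> bool" where
  "p_regular p x \<longleftrightarrow> \<not> p dvd (p div gcd x p)"

definition perfect :: "nat \<Rightarrow> (nat \<Rightarrow> nat \<Rightarrow> complex) \<Rightarrow> bool" where
  "perfect p m \<longleftrightarrow>
     (\<forall>x<p. \<forall>y<p. in_O p (m x y / of_nat (centr_card p x)) \<and>
                  in_O p (m x y / of_nat (centr_card p y))) \<and>
     (\<forall>x<p. \<forall>y<p. m x y \<noteq> 0 \<longrightarrow> (p_regular p x \<longleftrightarrow> p_regular p y))"

definition PI :: "nat \<Rightarrow> ((nat \<Rightarrow> int) \<Rightarrow> (nat \<Rightarrow> int)) \<Rightarrow> bool" where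
  "PI p f \<longleftrightarrow> linear_RK p f \<and> bij_betw f (RK p) (RK p) \<and>
     (\<forall>u\<in>RK p. \<forall>v\<in>RK p. inner p (f u) (f v) = inner p u v) \<and>
     perfect p (mu p f)"

definition elem_of :: "nat \<Rightarrow> (nat \<Rightarrow> complex) \<Rightarrow> nat \<Rightarrow> int" where
  "elem_of p h = (THE w. w \<in> RK p \<and> (\<forall>b<p. ev p w b = h b))"

definition I_lam :: "nat \<Rightarrow> nat \<Rightarrow> (nat \<Rightarrow> int) \<Rightarrow> (nat \<Rightarrow> int)" where
  "I_lam p l v = (\<lambda>c. \<Sum>a<p. v a * elem_of p (\<lambda>b. chi p l b * chi p a b) c)"

definition aut :: "nat \<Rightarrow> (nat \<Rightarrow> nat) \<Rightarrow> bool" where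
  "aut p s \<longleftrightarrow> bij_betw s {..<p} {..<p} \<and>
     (\<forall>x<p. \<forall>y<p. s ((x + y) mod p) = (s x + s y) mod p)"

definition I_sig :: "nat \<Rightarrow> (nat \<Rightarrow> nat) \<Rightarrow> (nat \<Rightarrow> int) \<Rightarrow> (nat \<Rightarrow> int)" where
  "I_sig p s v = (\<lambda>c. \<Sum>a<p. v a * elem_of p (\<lambda>b. chi p a (inv_into {..<p} s b)) c)"

end

theory Submission
  imports Defs "HOL-Computational_Algebra.Computational_Algebra" "HOL-Number_Theory.Cong"
begin


definition Psi :: "nat \<Rightarrow> int poly" where
  "Psi p = (\<Sum>i<p. monom (int (p choose Suc i)) i)"

lemma coeff_Psi: "coeff (Psi p) i = (if i < p then int (p choose Suc i) else 0)"
  unfolding Psi_def by (simp add: coeff_sum coeff_monom)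

lemma degree_Psi: assumes "p \<ge> 1" shows "degree (Psi p) = p - 1" "lead_coeff (Psi p) = 1"
proof -
  have "degree (Psi p) \<le> p - 1" by (rule degree_le) (auto simp: coeff_Psi)
  moreover have "coeff (Psi p) (p - 1) = 1" using assms by (simp add: coeff_Psi)
  moreover hence "p - 1 \<le> degree (Psi p)" by (intro le_degree) simp
  ultimately show "degree (Psi p) = p - 1" "lead_coeff (Psi p) = 1" by auto
qed

lemma eis_core:
  assumes p: "prime (p::nat)" and AB: "Psi p = A*B" and dA: "degree A < p - 1"
    and a0: "int p dvd coeff A 0" and nb0: "\<not> int p dvd coeff B 0"
    and la: "\<not> int p dvd lead_coeff A"
  shows False
proof -
  define i where "i = (LEAST i. \<not> int p dvd coeff A i)"
  have ex: "\<not> int p dvd coeff A i" unfolding i_def by (rule LeastI[of _ "degree A"]) (rule la)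
  have ile: "i \<le> degree A" unfolding i_def by (rule Least_le) (rule la)
  have lt: "\<And>j. j < i \<Longrightarrow> int p dvd coeff A j" unfolding i_def using not_less_Least by blast
  have "coeff (Psi p) i = (\<Sum>j\<le>i. coeff A j * coeff B (i-j))" using AB coeff_mult by simp
  also have "\<dots> = (\<Sum>j<i. coeff A j * coeff B (i-j)) + coeff A i * coeff B 0"
    by (simp add: lessThan_Suc_atMost[symmetric] sum.lessThan_Suc)
  finally have eq: "coeff (Psi p) i = (\<Sum>j<i. coeff A j * coeff B (i-j)) + coeff A i * coeff B 0" .
  have "p dvd (p choose Suc i)" using p dA ile by (intro dvd_choose_prime) (auto simp: prime_gt_0_nat)
  hence d1: "int p dvd coeff (Psi p) i" using dA ile by (simp add: coeff_Psi int_dvd_int_iff)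
  have d2: "int p dvd (\<Sum>j<i. coeff A j * coeff B (i-j))"
    by (rule dvd_sum) (simp add: lt)
  have "int p dvd coeff A i * coeff B 0" using d1 d2 eq by (metis dvd_add_right_iff)
  moreover have "prime (int p)" using p by (simp add: prime_nat_int_transfer)
  ultimately show False using ex nb0 by (simp add: prime_dvd_mult_iff)
qed

lemma eis:
  assumes p: "prime (p::nat)" and AB: "Psi p = A*B" and dA: "degree A \<ge> 1" and dB: "degree B \<ge> 1"
  shows False
proof -
  have p1: "p \<ge> 2" using p by (simp add: prime_ge_2_nat)
  have A0: "A \<noteq> 0" "B \<noteq> 0" using dA dB by auto
  have deg: "degree A + degree B = p - 1" using degree_Psi[of p] p1 AB A0 by (simp add: degree_mult_eq)
  have "lead_coeff A * lead_coeff B = 1" using degree_Psi(2)[of p] p1 AB by (simp add: lead_coeff_mult)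
  moreover have n1: "\<not> int p dvd 1" using p1 by (simp add: zdvd1_eq)
  ultimately have la: "\<not> int p dvd lead_coeff A" and lb: "\<not> int p dvd lead_coeff B"
    by (metis dvd_mult2, metis dvd_mult)
  have c0: "coeff A 0 * coeff B 0 = int p" proof -
    have "coeff (Psi p) 0 = int p" using p1 by (simp add: coeff_Psi)
    thus ?thesis using AB by (simp add: coeff_mult_0)
  qed
  have pr: "prime (int p)" using p by (simp add: prime_nat_int_transfer)
  have "int p dvd coeff A 0 \<or> int p dvd coeff B 0" using c0 pr by (metis dvd_refl prime_dvd_mult_iff)
  moreover have "\<not> (int p dvd coeff A 0 \<and> int p dvd coeff B 0)"
  proof
    assume "int p dvd coeff A 0 \<and> int p dvd coeff B 0"
    hence "int p * int p dvd int p" using c0 by (metis mult_dvd_mono)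
    hence "int p * int p \<le> int p" using p1 by (intro zdvd_imp_le) auto
    thus False using p1 by (simp add: mult_le_cancel_right1 del: of_nat_mult)
  qed
  ultimately show False
  proof (elim disjE)
    assume "int p dvd coeff A 0"
    thus False using eis_core[OF p AB _ _ _ la] deg dB \<open>\<not> (_ \<and> _)\<close> by auto
  next
    assume "int p dvd coeff B 0"
    thus False using eis_core[OF p _ _ _ _ lb, of A] AB deg dA \<open>\<not> (_ \<and> _)\<close> by (auto simp: mult.commute)
  qed
qed

lemma content_Psi: assumes "prime p" shows "content (Psi p) = 1" "primitive_part (Psi p) = Psi p"
proof -
  have p1: "p \<ge> 1" using prime_gt_0_nat[OF assms] by simp
  have "content (Psi p) dvd coeff (Psi p) (p - 1)" by (rule content_dvd_coeff)
  also have "coeff (Psi p) (p - 1) = 1" using p1 by (simp add: coeff_Psi)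
  finally show c: "content (Psi p) = 1" by (simp del: is_unit_content_iff add: is_unit_content_iff[symmetric])
  show "primitive_part (Psi p) = Psi p" unfolding primitive_part_def c by simp
qed

lemma gauss:
  assumes p: "prime (p::nat)" and AB: "smult c (Psi p) = A*B" and c: "c \<noteq> 0"
  shows "degree A = 0 \<or> degree B = 0"
proof (rule ccontr)
  assume "\<not> (degree A = 0 \<or> degree B = 0)"
  hence dA: "degree A \<ge> 1" and dB: "degree B \<ge> 1" by auto
  have "primitive_part (smult c (Psi p)) = primitive_part A * primitive_part B"
    using AB by (simp add: primitive_part_mult)
  hence e: "smult (sgn c) (Psi p) = primitive_part A * primitive_part B"
    using content_Psi[OF p] by (simp add: primitive_part_smult)
  have "Psi p = smult (sgn c) (smult (sgn c) (Psi p))" using c by (simp add: sgn_if)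
  also have "\<dots> = smult (sgn c) (primitive_part A) * primitive_part B" using e by simp
  finally have "Psi p = smult (sgn c) (primitive_part A) * primitive_part B" .
  moreover have "degree (smult (sgn c) (primitive_part A)) \<ge> 1" using dA c by (simp add: sgn_if)
  moreover have "degree (primitive_part B) \<ge> 1" using dB by simp
  ultimately show False using eis[OF p] by blast
qed

definition Phi :: "nat \<Rightarrow> int poly" where
  "Phi p = (\<Sum>k<p. monom 1 k)"

lemma geo_aux: "(x::'a::comm_ring_1) * (\<Sum>k<n. (x+1)^k) = (x+1)^n - 1"
  by (induction n) (simp_all add: algebra_simps)

lemma binom_aux:
  assumes "n \<ge> 1"
  shows "(x::'a::comm_ring_1) * (\<Sum>i<n. of_nat (n choose Suc i) * x^i) = (x+1)^n - 1"
proof -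
  obtain m where n: "n = Suc m" using assms by (cases n) auto
  have "(x+1)^n = (\<Sum>k\<le>n. of_nat (n choose k) * x^k * 1^(n-k))" by (rule binomial_ring)
  also have "\<dots> = 1 + (\<Sum>i\<le>m. of_nat (n choose Suc i) * x^Suc i)"
    unfolding n by (subst sum.atMost_Suc_shift) simp
  also have "(\<Sum>i\<le>m. of_nat (n choose Suc i) * x^Suc i) = x * (\<Sum>i<n. of_nat (n choose Suc i) * x^i)"
    unfolding n by (simp add: sum_distrib_left lessThan_Suc_atMost algebra_simps)
  finally show ?thesis by simp
qed

lemma Phi_Psi: assumes "p \<ge> 1" shows "pcompose (Phi p) [:1,1:] = Psi p"
proof -
  have "poly ([:0,1:] * pcompose (Phi p) [:1,1:]) = poly ([:0,1:] * Psi p)"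
  proof
    fix x :: int
    have "poly ([:0,1:] * pcompose (Phi p) [:1,1:]) x = x * (\<Sum>k<p. (x+1)^k)"
      by (simp add: Phi_def poly_pcompose poly_sum poly_monom add.commute)
    also have "\<dots> = (x+1)^p - 1" by (rule geo_aux)
    also have "\<dots> = x * (\<Sum>i<p. of_nat (p choose Suc i) * x^i)" using binom_aux[OF assms, of x] by simp
    also have "\<dots> = poly ([:0,1:] * Psi p) x" by (simp add: Psi_def poly_sum poly_monom)
    finally show "poly ([:0,1:] * pcompose (Phi p) [:1,1:]) x = poly ([:0,1:] * Psi p) x" .
  qed
  hence "[:0,1:] * pcompose (Phi p) [:1,1:] = [:0,1:] * Psi p" by (simp only: poly_eq_poly_eq_iff)
  thus ?thesis by simp
qed

lemma degree_Phi: assumes "p \<ge> 1" shows "degree (Phi p) = p - 1"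
proof -
  have "degree (pcompose (Phi p) [:1,1:]) = degree (Phi p)" by (simp add: degree_pcompose)
  thus ?thesis using Phi_Psi[OF assms] degree_Psi[OF assms] by simp
qed

abbreviation mpc :: "int poly \<Rightarrow> complex poly" where "mpc \<equiv> map_poly of_int"

lemma mpc_add: "mpc (P + Q) = mpc P + mpc Q" by (rule poly_eqI) (simp add: coeff_map_poly)
lemma mpc_diff: "mpc (P - Q) = mpc P - mpc Q" by (rule poly_eqI) (simp add: coeff_map_poly)
lemma mpc_mult: "mpc (P * Q) = mpc P * mpc Q" by (rule poly_eqI) (simp add: coeff_map_poly coeff_mult)
lemma mpc_smult: "mpc (smult c P) = smult (of_int c) (mpc P)" by (rule poly_eqI) (simp add: coeff_map_poly)
lemma mpc_sum: "mpc (sum f A) = (\<Sum>a\<in>A. mpc (f a))" by (rule poly_eqI) (simp add: coeff_map_poly coeff_sum)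

lemma poly_mpc_monoms: "poly (mpc (\<Sum>k<n. monom (c k) k)) x = (\<Sum>k<n. of_int (c k) * x^k)"
  by (simp add: mpc_sum map_poly_monom poly_sum poly_monom)



lemma zeta_pow: "zeta p ^ k = cis (2 * pi * real k / real p)"
  by (simp add: zeta_def DeMoivre) (simp add: mult.commute)

lemma zeta_p: "p > 0 \<Longrightarrow> zeta p ^ p = 1"
  by (simp add: zeta_pow)

lemma zeta_mod: assumes "p > 0" shows "zeta p ^ k = zeta p ^ (k mod p)"
proof -
  have "zeta p ^ k = zeta p ^ (p * (k div p) + k mod p)" by simp
  also have "\<dots> = (zeta p ^ p) ^ (k div p) * zeta p ^ (k mod p)" by (metis power_add power_mult)
  finally show ?thesis using zeta_p[OF assms] by simp
qed

lemma zeta_ne1: assumes "0 < k" "k < p" shows "zeta p ^ k \<noteq> 1"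
proof
  assume "zeta p ^ k = 1"
  hence "Re (zeta p ^ k) = 1" by simp
  hence "cos (2 * pi * real k / real p) = 1" by (simp add: zeta_pow)
  then obtain n :: int where n: "2 * pi * real k / real p = real_of_int n * 2 * pi" by (auto simp: cos_one_2pi_int)
  have pp: "real p > 0" using assms by simp
  have rk: "real k = real_of_int n * real p" using n pp by (simp add: field_simps)
  show False
  proof (cases "n \<le> 0")
    case True hence "real_of_int n * real p \<le> 0" using pp by (simp add: mult_nonpos_nonneg)
    thus False using rk assms by simp
  next
    case False hence "real_of_int n \<ge> 1" by simp
    hence "real_of_int n * real p \<ge> real p" using pp by simp
    moreover have "real k < real p" using assms by simp
    ultimately show False using rk by linarith
  qed
qed

lemma zeta_sum: assumes "p > 0" "\<not> p dvd j" shows "(\<Sum>b<p. zeta p ^ (j * b)) = 0"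
proof -
  have ne: "zeta p ^ j \<noteq> 1" using zeta_mod[OF assms(1), of j] zeta_ne1[of "j mod p" p] assms
    by (simp add: dvd_eq_mod_eq_0 mod_less_divisor)
  have pw: "(zeta p ^ j) ^ p = 1" by (metis power_mult mult.commute power_one zeta_p[OF assms(1)])
  have "(\<Sum>b<p. zeta p ^ (j * b)) = (\<Sum>b<p. (zeta p ^ j) ^ b)" by (simp add: power_mult)
  also have "\<dots> = 0" using ne pw by (simp add: sum_gp_strict)
  finally show ?thesis .
qed

lemma poly_const_deg0: assumes "degree P = 0" shows "P = [:coeff P 0:]"
  by (rule poly_eqI) (metis assms coeff_pCons_0 coeff_pCons_Suc coeff_0 coeff_eq_0 not0_implies_Suc zero_less_Suc)

lemma mindeg_aux:
  assumes p: "prime p"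
  shows "\<forall>P. degree P = n \<longrightarrow> P \<noteq> 0 \<longrightarrow> poly (mpc P) (zeta p) = 0 \<longrightarrow> p - 1 \<le> n"
proof (induction n rule: less_induct)
  case (less n)
  show ?case
  proof (intro allI impI)
    fix P :: "int poly" assume dP: "degree P = n" and P0: "P \<noteq> 0" and rt: "poly (mpc P) (zeta p) = 0"
    show "p - 1 \<le> n"
    proof (rule ccontr)
      assume nlt: "\<not> p - 1 \<le> n"
      have p2: "p \<ge> 2" using p by (simp add: prime_ge_2_nat)
      obtain q r where pd: "pseudo_divmod (Phi p) P = (q, r)" by (metis surj_pair)
      define c where "c = lead_coeff P ^ (Suc (degree (Phi p)) - degree P)"
      have c0: "c \<noteq> 0" using P0 by (simp add: c_def)
      have eq: "smult c (Phi p) = P * q + r" using pseudo_divmod(1)[OF P0 pd] by (simp add: c_def)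
      have rr: "r = 0 \<or> degree r < degree P" using pseudo_divmod(2)[OF P0 pd] .
      have phi0: "poly (mpc (Phi p)) (zeta p) = 0"
        unfolding Phi_def using poly_mpc_monoms[where n=p and c="\<lambda>_. 1" and x="zeta p"] zeta_sum[of p 1] p2
        by simp
      have r0: "r = 0"
      proof (rule ccontr)
        assume r0: "r \<noteq> 0"
        have "r = smult c (Phi p) - P * q" using eq by simp
        hence "poly (mpc r) (zeta p) = 0" using phi0 rt by (simp add: mpc_diff mpc_mult mpc_smult)
        hence "p - 1 \<le> degree r" using less.IH[of "degree r"] rr r0 dP by auto
        thus False using rr r0 dP nlt by auto
      qed
      have eq2: "smult c (Phi p) = P * q" using eq r0 by simp
      have "Phi p \<noteq> 0" using degree_Phi[of p] p2 by (auto simp del: degree_Phi)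
      hence q0: "q \<noteq> 0" using eq2 c0 by auto
      have "pcompose (smult c (Phi p)) [:1,1:] = pcompose P [:1,1:] * pcompose q [:1,1:]"
        using eq2 by (simp add: pcompose_mult)
      hence "smult c (Psi p) = pcompose P [:1,1:] * pcompose q [:1,1:]"
        using Phi_Psi[of p] p2 by (simp add: pcompose_smult)
      from gauss[OF p this c0] have "degree P = 0 \<or> degree q = 0" by (simp add: degree_pcompose)
      thus False
      proof
        assume "degree P = 0"
        hence "P = [:coeff P 0:]" by (rule poly_const_deg0)
        moreover have "coeff P 0 \<noteq> 0" using P0 calculation by (metis pCons_0_0)
        ultimately show False using rt by (metis map_poly_pCons map_poly_0 poly_pCons poly_0 mult_zero_right add.right_neutral of_int_eq_0_iff)
      next
        assume "degree q = 0"
        hence "degree (smult c (Phi p)) = n" using eq2 P0 q0 dP by (simp add: degree_mult_eq)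
        thus False using c0 degree_Phi[of p] p2 nlt by simp
      qed
    qed
  qed
qed

lemma mindeg: "prime p \<Longrightarrow> P \<noteq> 0 \<Longrightarrow> poly (mpc P) (zeta p) = 0 \<Longrightarrow> p - 1 \<le> degree P"
  using mindeg_aux by blast

lemma rel:
  assumes p: "prime p" and s: "(\<Sum>k<p. of_int (e k) * zeta p ^ k) = 0" and k: "k < p"
  shows "e k = e 0"
proof -
  have p2: "p \<ge> 2" using p by (simp add: prime_ge_2_nat)
  define P where "P = (\<Sum>k<p-1. monom (e k - e (p-1)) k)"
  have "poly (mpc P) (zeta p) = (\<Sum>k<p-1. of_int (e k - e (p-1)) * zeta p ^ k)"
    unfolding P_def by (rule poly_mpc_monoms)
  also have "\<dots> = (\<Sum>k<p. of_int (e k - e (p-1)) * zeta p ^ k)"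
  proof -
    have "{..<p} = insert (p-1) {..<p-1}" using p2 by auto
    thus ?thesis by simp
  qed
  also have "\<dots> = (\<Sum>k<p. of_int (e k) * zeta p ^ k) - of_int (e (p-1)) * (\<Sum>k<p. zeta p ^ (1 * k))"
    by (simp add: algebra_simps sum_subtractf sum_distrib_left sum_distrib_right)
  also have "\<dots> = 0" using s zeta_sum[of p 1] p2 by simp
  finally have rt: "poly (mpc P) (zeta p) = 0" .
  have "degree P \<le> p - 2" unfolding P_def
    by (rule degree_le) (auto simp: coeff_sum coeff_monom)
  hence P0: "P = 0" using mindeg[OF p _ rt] p2 by fastforce
  have ce: "\<And>j. j < p \<Longrightarrow> e j = e (p-1)"
  proof -
    fix j assume j: "j < p"
    show "e j = e (p-1)"
    proof (cases "j = p - 1")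
      case False
      hence "j < p - 1" using j by simp
      hence "coeff P j = e j - e (p-1)" unfolding P_def by (simp add: coeff_sum coeff_monom)
      thus ?thesis using P0 by simp
    qed simp
  qed
  show ?thesis using ce[OF k] ce[of 0] p2 by simp
qed



lemma basis_RK: "a < p \<Longrightarrow> basis a \<in> RK p"
  by (simp add: RK_def basis_def)

lemma ev_basis: assumes "c < p" shows "ev p (basis c) b = chi p c b"
proof -
  have "ev p (basis c) b = (\<Sum>a<p. if a = c then chi p c b else 0)"
    unfolding ev_def basis_def by (rule sum.cong) auto
  also have "\<dots> = chi p c b" using assms by simp
  finally show ?thesis .
qed

lemma dvd_small: assumes "(p::nat) dvd x" "0 < x" "x < 2 * p" shows "x = p"
proof -
  obtain k where x: "x = p * k" using assms(1) by auto
  have "k \<noteq> 0" using x assms(2) by auto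
  moreover have "k < 2" using x assms(3) by (metis mult_less_cancel1 mult.commute nat_less_le zero_less_mult_iff assms(2))
  ultimately have "k = 1" by linarith
  thus ?thesis using x by simp
qed

lemma inner_sum: assumes "a < p" "c < p"
  shows "(\<Sum>b<p. zeta p ^ ((a + (p - c)) * b)) = (if a = c then of_nat p else 0)"
proof (cases "a = c")
  case True
  have "(\<Sum>b<p. zeta p ^ ((a + (p - c)) * b)) = (\<Sum>b<p. (zeta p ^ p) ^ b)"
    using True assms by (simp add: power_mult)
  thus ?thesis using True zeta_p[of p] assms by simp
next
  case False
  have "\<not> p dvd (a + (p - c))"
  proof
    assume "p dvd (a + (p - c))"
    hence "a + (p - c) = p" using assms by (intro dvd_small) auto
    thus False using False assms by simp
  qed
  thus ?thesis using zeta_sum[of p] False assms by simp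
qed

lemma inversion: assumes w: "w \<in> RK p" and c: "c < p"
  shows "(\<Sum>b<p. ev p w b * zeta p ^ ((p - c) * b)) = of_nat p * of_int (w c)"
proof -
  have "(\<Sum>b<p. ev p w b * zeta p ^ ((p - c) * b))
      = (\<Sum>b<p. \<Sum>a<p. of_int (w a) * zeta p ^ ((a + (p - c)) * b))"
    unfolding ev_def chi_def sum_distrib_right
    by (intro sum.cong refl) (simp add: add_mult_distrib add_mult_distrib2 power_add mult.assoc mult.commute)
  also have "\<dots> = (\<Sum>a<p. of_int (w a) * (\<Sum>b<p. zeta p ^ ((a + (p - c)) * b)))"
    by (subst sum.swap) (simp add: sum_distrib_left)
  also have "\<dots> = (\<Sum>a<p. if a = c then of_int (w c) * of_nat p else 0)"
    by (rule sum.cong) (auto simp: inner_sum c)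
  also have "\<dots> = of_nat p * of_int (w c)" using c by simp
  finally show ?thesis .
qed

lemma ev_inj: assumes "w \<in> RK p" "w' \<in> RK p" "\<forall>b<p. ev p w b = ev p w' b"
  shows "w = w'"
proof
  fix c show "w c = w' c"
  proof (cases "c < p")
    case True
    have "of_nat p * (of_int (w c) :: complex) = of_nat p * of_int (w' c)"
      using inversion[OF assms(1) True] inversion[OF assms(2) True] assms(3) by auto
    thus ?thesis using True by auto
  next
    case False thus ?thesis using assms by (simp add: RK_def)
  qed
qed

lemma elem_of_eq: assumes p: "p > 0" and h: "\<forall>b<p. h b = zeta p ^ (j * b)"
  shows "elem_of p h = basis (j mod p)"
  unfolding elem_of_def
proof (rule the_equality)
  have ok: "\<forall>b<p. ev p (basis (j mod p)) b = h b"
  proof (intro allI impI)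
    fix b assume b: "b < p"
    have "ev p (basis (j mod p)) b = zeta p ^ ((j mod p) * b)"
      using p by (simp add: ev_basis chi_def)
    also have "\<dots> = zeta p ^ (((j mod p) * b) mod p)" using zeta_mod[OF p] by blast
    also have "\<dots> = zeta p ^ ((j * b) mod p)" by (simp add: mod_mult_left_eq)
    also have "\<dots> = zeta p ^ (j * b)" using zeta_mod[OF p] by metis
    finally show "ev p (basis (j mod p)) b = h b" using h b by simp
  qed
  thus "basis (j mod p) \<in> RK p \<and> (\<forall>b<p. ev p (basis (j mod p)) b = h b)"
    using p by (simp add: basis_RK)
  fix w assume "w \<in> RK p \<and> (\<forall>b<p. ev p w b = h b)"
  thus "w = basis (j mod p)" using ok p by (intro ev_inj) (auto simp: basis_RK)
qed

definition perm_op :: "nat \<Rightarrow> (nat \<Rightarrow> nat) \<Rightarrow> (nat \<Rightarrow> int) \<Rightarrow> (nat \<Rightarrow> int)" where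
  "perm_op p s v = (\<lambda>c. \<Sum>a<p. v a * basis (s a) c)"

lemma perm_op_comp: assumes "\<forall>a<p. s a < p"
  shows "perm_op p t (perm_op p s v) = perm_op p (t \<circ> s) v"
proof
  fix c
  have "perm_op p t (perm_op p s v) c = (\<Sum>a'<p. \<Sum>a<p. v a * basis (s a) a' * basis (t a') c)"
    unfolding perm_op_def by (simp add: sum_distrib_right)
  also have "\<dots> = (\<Sum>a<p. v a * (\<Sum>a'<p. basis (s a) a' * basis (t a') c))"
    by (subst sum.swap) (simp add: sum_distrib_left mult.assoc)
  also have "\<dots> = (\<Sum>a<p. v a * basis (t (s a)) c)"
  proof (rule sum.cong)
    fix a assume "a \<in> {..<p}"
    hence sa: "s a < p" using assms by auto
    have "(\<Sum>a'<p. basis (s a) a' * basis (t a') c) = (\<Sum>a'<p. if a' = s a then basis (t (s a)) c else 0)"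
      by (rule sum.cong) (auto simp: basis_def)
    also have "\<dots> = basis (t (s a)) c" using sa by simp
    finally show "v a * (\<Sum>a'<p. basis (s a) a' * basis (t a') c) = v a * basis (t (s a)) c" by simp
  qed simp
  finally show "perm_op p t (perm_op p s v) c = perm_op p (t \<circ> s) v c" by (simp add: perm_op_def)
qed

lemma perm_op_id: assumes "\<forall>a<p. s a = a" "v \<in> RK p" shows "perm_op p s v = v"
proof
  fix c
  have "perm_op p s v c = (\<Sum>a<p. if a = c then v c else 0)"
    unfolding perm_op_def by (rule sum.cong) (auto simp: assms basis_def)
  also have "\<dots> = v c" using assms(2) by (auto simp: RK_def)
  finally show "perm_op p s v c = v c" .
qed

lemma I_lam_eq: assumes "p > 0" shows "I_lam p l w = perm_op p (\<lambda>a. (l + a) mod p) w"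
proof -
  have "\<And>a. elem_of p (\<lambda>b. chi p l b * chi p a b) = basis ((l + a) mod p)"
    using assms by (intro elem_of_eq) (auto simp: chi_def power_add[symmetric] algebra_simps)
  thus ?thesis by (simp add: I_lam_def perm_op_def)
qed



lemma fiber_sum:
  fixes p :: nat
  assumes "\<forall>a<p. g a < p"
  shows "(\<Sum>a<p. h (g a)) = (\<Sum>k<p. of_nat (card {a. a < p \<and> g a = k}) * h k)"
proof -
  have "(\<Sum>a<p. h (g a)) = (\<Sum>k<p. \<Sum>a\<in>{a. a \<in> {..<p} \<and> g a = k}. h (g a))"
  proof -
    have "(\<Sum>k\<in>{..<p}. \<Sum>a\<in>{a. a \<in> {..<p} \<and> g a = k}. h (g a)) = (\<Sum>a\<in>{..<p}. h (g a))"
      by (rule sum.group) (use assms in auto)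
    thus ?thesis by simp
  qed
  also have "\<dots> = (\<Sum>k<p. of_nat (card {a. a < p \<and> g a = k}) * h k)"
  proof (rule sum.cong)
    fix k
    have "(\<Sum>a\<in>{a. a \<in> {..<p} \<and> g a = k}. h (g a)) = (\<Sum>a\<in>{a. a < p \<and> g a = k}. h k)"
      by (rule sum.cong) auto
    thus "(\<Sum>a\<in>{a. a \<in> {..<p} \<and> g a = k}. h (g a)) = of_nat (card {a. a < p \<and> g a = k}) * h k"
      by simp
  qed simp
  finally show ?thesis .
qed

lemma fiber_card_sum:
  fixes p :: nat
  assumes "\<forall>a<p. g a < p"
  shows "(\<Sum>k<p. card {a. a < p \<and> g a = k}) = p"
  using fiber_sum[OF assms, where h = "\<lambda>_. 1::nat"] by simp

lemma affine:
  assumes p: "prime p" and pr: "\<forall>a<p. \<pi> a < p" and inj: "inj_on \<pi> {..<p}"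
    and O: "\<forall>y<p. in_O p ((\<Sum>a<p. zeta p ^ (\<pi> a + a * y)) / of_nat p)"
  shows "\<exists>c. 0 < c \<and> c < p \<and> (\<forall>a<p. \<pi> a = (\<pi> 0 + a * c) mod p)"
proof -
  have p2: "p \<ge> 2" using p by (simp add: prime_ge_2_nat)
  hence p0: "p > 0" by simp
  define y where "y = (\<pi> 0 + p - \<pi> 1) mod p"
  have yp: "y < p" using p0 by (simp add: y_def)
  define g where "g a = (\<pi> a + a * y) mod p" for a
  have gp: "\<forall>a<p. g a < p" using p0 by (simp add: g_def)
  define n where "n k = card {a. a < p \<and> g a = k}" for k
  have S: "(\<Sum>a<p. zeta p ^ (\<pi> a + a * y)) = (\<Sum>k<p. of_int (int (n k)) * zeta p ^ k)"
  proof -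
    have "(\<Sum>a<p. zeta p ^ (\<pi> a + a * y)) = (\<Sum>a<p. zeta p ^ (g a))"
      unfolding g_def using zeta_mod[OF p0] by simp
    also have "\<dots> = (\<Sum>k<p. of_nat (n k) * zeta p ^ k)"
      unfolding n_def by (rule fiber_sum[OF gp])
    finally show ?thesis by simp
  qed
  from O yp obtain m cc where m: "\<not> int p dvd m"
    and mc: "of_int m * ((\<Sum>a<p. zeta p ^ (\<pi> a + a * y)) / of_nat p) = (\<Sum>k<p. of_int (cc k) * zeta p ^ k)"
    unfolding in_O_def by blast
  have "(\<Sum>k<p. of_int (m * int (n k) - int p * cc k) * zeta p ^ k) =
      of_int m * (\<Sum>a<p. zeta p ^ (\<pi> a + a * y)) - of_nat p * (\<Sum>k<p. of_int (cc k) * zeta p ^ k)"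
    unfolding S by (simp add: sum_subtractf sum_distrib_left algebra_simps)
  also have "\<dots> = 0" using mc p0 by (simp add: field_simps)
  finally have rel0: "(\<Sum>k<p. of_int (m * int (n k) - int p * cc k) * zeta p ^ k) = 0" .
  have ncong: "n k mod p = n 0 mod p" if k: "k < p" for k
  proof -
    have "m * int (n k) - int p * cc k = m * int (n 0) - int p * cc 0"
      using rel[OF p rel0 k] .
    hence "m * (int (n k) - int (n 0)) = int p * (cc k - cc 0)" by (simp add: algebra_simps)
    hence "int p dvd m * (int (n k) - int (n 0))" by simp
    moreover have "prime (int p)" using p by simp
    ultimately have "int p dvd int (n k) - int (n 0)" using m by (simp add: prime_dvd_mult_iff)
    hence "int (n k) mod int p = int (n 0) mod int p" by (simp add: mod_eq_dvd_iff)
    thus ?thesis by (metis of_nat_mod of_nat_eq_iff)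
  qed
  have tot: "(\<Sum>k<p. n k) = p" unfolding n_def by (rule fiber_card_sum[OF gp])
  have g0: "g 0 = \<pi> 0" using pr p0 by (simp add: g_def)
  have g1: "g 1 = \<pi> 0"
  proof -
    have "g 1 = (\<pi> 1 + (\<pi> 0 + p - \<pi> 1) mod p) mod p" by (simp add: g_def y_def)
    also have "\<dots> = (\<pi> 1 + (\<pi> 0 + p - \<pi> 1)) mod p" by (simp add: mod_add_right_eq)
    also have "\<pi> 1 + (\<pi> 0 + p - \<pi> 1) = \<pi> 0 + p" using pr[rule_format, of 1] p2 by simp
    finally show ?thesis using pr p0 by simp
  qed
  have nk0: "n (\<pi> 0) \<ge> 2"
  proof -
    have "{0, 1} \<subseteq> {a. a < p \<and> g a = \<pi> 0}" using g0 g1 p2 by auto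
    hence "card {0::nat, 1} \<le> n (\<pi> 0)" unfolding n_def by (intro card_mono) auto
    thus ?thesis by simp
  qed
  have all: "\<forall>a<p. g a = \<pi> 0"
  proof (rule ccontr)
    assume "\<not> (\<forall>a<p. g a = \<pi> 0)"
    then obtain a1 where a1: "a1 < p" "g a1 \<noteq> \<pi> 0" by auto
    define k1 where "k1 = g a1"
    have k1p: "k1 < p" using gp a1 by (simp add: k1_def)
    have nk1: "n k1 \<ge> 1"
    proof -
      have "{a1} \<subseteq> {a. a < p \<and> g a = k1}" using a1 by (auto simp: k1_def)
      hence "card {a1} \<le> n k1" unfolding n_def by (intro card_mono) auto
      thus ?thesis by simp
    qed
    have k01: "\<pi> 0 \<noteq> k1" using a1 by (simp add: k1_def)
    have pi0p: "\<pi> 0 < p" using pr p0 by simp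
    show False
    proof (cases "n (\<pi> 0) mod p = 0")
      case True
      hence "p dvd n (\<pi> 0)" by auto
      hence "p \<le> n (\<pi> 0)" using nk0 by (intro dvd_imp_le) auto
      moreover have "(\<Sum>k\<in>{\<pi> 0, k1}. n k) \<le> (\<Sum>k<p. n k)"
        using pi0p k1p by (intro sum_mono2) auto
      ultimately show False using k01 nk1 tot by simp
    next
      case False
      have ge1: "n k \<ge> 1" if "k < p" for k
      proof (rule ccontr)
        assume "\<not> n k \<ge> 1" hence "n k = 0" by simp
        hence "n 0 mod p = 0" using ncong[OF that] by simp
        thus False using False ncong[OF pi0p] by simp
      qed
      have "(\<Sum>k<p. n k) = n (\<pi> 0) + (\<Sum>k\<in>{..<p} - {\<pi> 0}. n k)"
        using pi0p by (subst sum.remove[of _ "\<pi> 0"]) auto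
      moreover have "(\<Sum>k\<in>{..<p} - {\<pi> 0}. n k) \<ge> (\<Sum>k\<in>{..<p} - {\<pi> 0}. 1)"
        using ge1 by (intro sum_mono) auto
      moreover have "(\<Sum>k\<in>{..<p} - {\<pi> 0}. (1::nat)) = p - 1" using pi0p by simp
      ultimately show False using nk0 tot p2 by linarith
    qed
  qed
  have y0: "y \<noteq> 0"
  proof
    assume "y = 0"
    have e: "(\<pi> 1 + 1 * y) mod p = \<pi> 0" using all[rule_format, of 1] p2 unfolding g_def by simp
    have "\<pi> 1 < p" using pr[rule_format, of 1] p2 by simp
    hence "\<pi> 1 = \<pi> 0" using e \<open>y = 0\<close> by simp
    thus False using inj_onD[OF inj, of 1 0] p2 by auto
  qed
  define c where "c = p - y"
  have cp: "0 < c" "c < p" using yp y0 by (auto simp: c_def)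
  have yc: "y + c = p" using yp by (simp add: c_def)
  have "\<forall>a<p. \<pi> a = (\<pi> 0 + a * c) mod p"
  proof (intro allI impI)
    fix a assume a: "a < p"
    have "\<pi> a = (\<pi> a + a * p) mod p" using pr a by simp
    also have "\<pi> a + a * p = (\<pi> a + a * y) + a * c" using yc by (metis add_mult_distrib2 add.assoc)
    also have "(\<pi> a + a * y + a * c) mod p = ((\<pi> a + a * y) mod p + a * c) mod p"
      by (simp add: mod_add_left_eq)
    also have "(\<pi> a + a * y) mod p = \<pi> 0" using all[rule_format, OF a] by (simp add: g_def)
    finally show "\<pi> a = (\<pi> 0 + a * c) mod p" .
  qed
  thus ?thesis using cp by blast
qed



lemma basis_inj: "basis a = basis b \<Longrightarrow> a = b"
  by (metis basis_def one_neq_zero)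

lemma modinv_aux: assumes "(c * t) mod p = (1::nat)" shows "(t * (c * x)) mod p = x mod p"
proof -
  have "(t * (c * x)) mod p = ((c * t) * x) mod p" by (simp add: mult_ac)
  also have "\<dots> = (((c * t) mod p) * x) mod p" by (simp add: mod_mult_left_eq)
  finally show ?thesis using assms by simp
qed

theorem mainTheorem11:
  fixes p :: nat and f :: "(nat \<Rightarrow> int) \<Rightarrow> (nat \<Rightarrow> int)"
  assumes "prime p"
    and "PI p f"
    and "\<forall>\<chi>\<in>Irr p. f \<chi> \<in> Irr p"
  shows "\<exists>l<p. \<exists>s. aut p s \<and> (\<forall>v\<in>RK p. I_sig p s (I_lam p l (f v)) = v)"
proof -
  note p = assms(1)
  have p2: "p \<ge> 2" using p by (simp add: prime_ge_2_nat)
  hence p0: "p > 0" by simp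
  have lin: "linear_RK p f" and bij: "bij_betw f (RK p) (RK p)" and perf: "perfect p (mu p f)"
    using assms(2) by (auto simp: PI_def)
  have ex: "\<forall>a<p. \<exists>b. b < p \<and> f (basis a) = basis b"
  proof (intro allI impI)
    fix a assume a: "a < p"
    hence "basis a \<in> Irr p" by (auto simp: Irr_def)
    hence "f (basis a) \<in> Irr p" using assms(3) by blast
    thus "\<exists>b. b < p \<and> f (basis a) = basis b" by (auto simp: Irr_def)
  qed
  define \<pi> where "\<pi> a = (SOME b. b < p \<and> f (basis a) = basis b)" for a
  have pi: "\<pi> a < p \<and> f (basis a) = basis (\<pi> a)" if "a < p" for a
    unfolding \<pi>_def using someI_ex[OF ex[rule_format, OF that]] .
  have pr: "\<forall>a<p. \<pi> a < p" using pi by blast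
  have injf: "inj_on f (RK p)" using bij by (rule bij_betw_imp_inj_on)
  have inj: "inj_on \<pi> {..<p}"
  proof (rule inj_onI)
    fix a a' assume a: "a \<in> {..<p}" "a' \<in> {..<p}" "\<pi> a = \<pi> a'"
    hence "f (basis a) = f (basis a')" using pi by auto
    hence "basis a = basis a'" using injf a by (auto simp: basis_RK dest: inj_onD)
    thus "a = a'" by (rule basis_inj)
  qed
  have mu: "mu p f 1 y = (\<Sum>a<p. zeta p ^ (\<pi> a + a * y))" for y
    unfolding mu_def
  proof (rule sum.cong)
    fix a assume "a \<in> {..<p}"
    hence "f (basis a) = basis (\<pi> a)" "\<pi> a < p" using pi by auto
    thus "ev p (f (basis a)) 1 * chi p a y = zeta p ^ (\<pi> a + a * y)"
      by (simp add: ev_basis chi_def power_add)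
  qed simp
  have cc: "centr_card p x = p" for x
  proof -
    have "{h. h < p \<and> (h + x) mod p = (x + h) mod p} = {..<p}" by (auto simp: add.commute)
    thus ?thesis by (simp add: centr_card_def)
  qed
  have O: "\<forall>y<p. in_O p ((\<Sum>a<p. zeta p ^ (\<pi> a + a * y)) / of_nat p)"
  proof (intro allI impI)
    fix y assume y: "y < p"
    have P1: "\<forall>x<p. \<forall>y<p. in_O p (mu p f x y / of_nat (centr_card p x)) \<and> in_O p (mu p f x y / of_nat (centr_card p y))"
      using perf unfolding perfect_def by (rule conjunct1)
    have "1 < p" using p2 by simp
    hence "in_O p (mu p f 1 y / of_nat (centr_card p 1))" using P1 y by blast
    thus "in_O p ((\<Sum>a<p. zeta p ^ (\<pi> a + a * y)) / of_nat p)" by (simp only: mu cc)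
  qed
  obtain c where c: "0 < c" "c < p" and aff: "\<forall>a<p. \<pi> a = (\<pi> 0 + a * c) mod p"
    using affine[OF p pr inj O] by blast
  have "\<not> p dvd c" using c by (auto dest: dvd_imp_le)
  hence "coprime c p" using prime_imp_coprime[OF p] by (simp add: coprime_commute)
  then obtain t where "[c * t = Suc 0] (mod p)" using cong_solve_coprime_nat by blast
  hence ct: "(c * t) mod p = 1" using p2 by (simp add: cong_def)
  define s where "s x = (c * x) mod p" for x
  define l where "l = (p - \<pi> 0) mod p"
  have lp: "l < p" using p0 by (simp add: l_def)
  have sp: "s ` {..<p} \<subseteq> {..<p}" using p0 by (auto simp: s_def)
  have injs: "inj_on s {..<p}"
  proof (rule inj_onI)
    fix x x' assume x: "x \<in> {..<p}" "x' \<in> {..<p}" "s x = s x'"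
    hence "(t * (c * x)) mod p = (t * (c * x')) mod p"
      unfolding s_def by (metis mod_mult_right_eq)
    hence "x mod p = x' mod p" using modinv_aux[OF ct] by simp
    thus "x = x'" using x by simp
  qed
  have aut: "aut p s"
    unfolding aut_def
  proof
    show "bij_betw s {..<p} {..<p}" using endo_inj_surj[OF _ sp injs] injs by (simp add: bij_betw_def)
    show "\<forall>x<p. \<forall>y<p. s ((x + y) mod p) = (s x + s y) mod p"
      by (simp add: s_def mod_mult_right_eq add_mult_distrib2 mod_add_eq)
  qed
  have invs: "inv_into {..<p} s b = (t * b) mod p" if b: "b < p" for b
  proof (rule inv_into_f_eq[OF injs])
    show "(t * b) mod p \<in> {..<p}" using p0 by simp
    have "s ((t * b) mod p) = (c * (t * b)) mod p" by (simp add: s_def mod_mult_right_eq)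
    also have "\<dots> = (t * (c * b)) mod p" by (simp add: mult_ac)
    also have "\<dots> = b" using modinv_aux[OF ct] b by simp
    finally show "s ((t * b) mod p) = b" .
  qed
  have Isig: "I_sig p s w = perm_op p (\<lambda>a. (a * t) mod p) w" for w
  proof -
    have "elem_of p (\<lambda>b. chi p a (inv_into {..<p} s b)) = basis ((a * t) mod p)" for a
    proof (rule elem_of_eq[OF p0], intro allI impI)
      fix b assume b: "b < p"
      have "chi p a (inv_into {..<p} s b) = zeta p ^ (a * ((t * b) mod p))" by (simp add: chi_def invs[OF b])
      also have "\<dots> = zeta p ^ ((a * ((t * b) mod p)) mod p)" using zeta_mod[OF p0] by blast
      also have "\<dots> = zeta p ^ ((a * t * b) mod p)" by (simp add: mod_mult_right_eq mult.assoc)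
      also have "\<dots> = zeta p ^ (a * t * b)" using zeta_mod[OF p0] by metis
      finally show "chi p a (inv_into {..<p} s b) = zeta p ^ (a * t * b)" .
    qed
    thus ?thesis by (simp add: I_sig_def perm_op_def)
  qed
  have feq: "f v = perm_op p \<pi> v" if v: "v \<in> RK p" for v
  proof -
    have "f v = (\<lambda>c. \<Sum>a<p. v a * f (basis a) c)" using lin v by (simp add: linear_RK_def)
    also have "\<dots> = perm_op p \<pi> v" unfolding perm_op_def
      by (intro ext sum.cong refl) (simp add: pi)
    finally show ?thesis .
  qed
  have key: "(((l + \<pi> a) mod p) * t) mod p = a" if a: "a < p" for a
  proof -
    have pi0: "\<pi> 0 < p" using pr p0 by simp
    have "(l + \<pi> a) mod p = ((p - \<pi> 0) + (\<pi> 0 + a * c)) mod p"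
      unfolding l_def aff[rule_format, OF a] by (simp add: mod_add_eq)
    also have "(p - \<pi> 0) + (\<pi> 0 + a * c) = p + a * c" using pi0 by simp
    finally have e1: "(l + \<pi> a) mod p = (a * c) mod p" by simp
    have "(((a * c) mod p) * t) mod p = ((a * c) * t) mod p" by (rule mod_mult_left_eq)
    also have "((a * c) * t) mod p = (t * (c * a)) mod p" by (simp add: mult_ac)
    also have "\<dots> = a" using modinv_aux[OF ct, of a] a by simp
    finally show ?thesis using e1 by simp
  qed
  have "\<forall>v\<in>RK p. I_sig p s (I_lam p l (f v)) = v"
  proof
    fix v assume v: "v \<in> RK p"
    have "I_sig p s (I_lam p l (f v)) =
        perm_op p (\<lambda>a. (a * t) mod p) (perm_op p (\<lambda>a. (l + a) mod p) (perm_op p \<pi> v))"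
      by (simp add: Isig I_lam_eq[OF p0] feq[OF v])
    also have "\<dots> = perm_op p ((\<lambda>a. (a * t) mod p) \<circ> ((\<lambda>a. (l + a) mod p) \<circ> \<pi>)) v"
      using pr p0 by (simp add: perm_op_comp)
    also have "\<dots> = v" using key v by (intro perm_op_id) auto
    finally show "I_sig p s (I_lam p l (f v)) = v" .
  qed
  thus ?thesis using lp aut by blast
qed

end
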